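(* Let $H\in(0,1)$ and let $B^H$ be a fractional Brownian motion on $[0,1]$ with Hurst index $H$. For all $k\ge1$ and $j=0,1,\dots,2^{k-1}-1$, $$\mathbb{V}\bigl(B^H(t^k_{2j+1})\,\big|\,\mathbf{B}^H_{k-1}\bigr)\le 2\cdot 2^{-2kH},$$ where $\mathbf{B}^H_{k-1}=(B^H(t^{k-1}_0),\dots,B^H(t^{k-1}_{2^{k-1}}))$ and the left side is the (deterministic) conditional variance.
   Context: A fractional Brownian motion with Hurst index $H$ is a centered Gaussian process with $B^H(0)=0$ and covariance $\mathbb{E}[B^H(s)B^H(t)]=\tfrac12(|s|^{2H}+|t|^{2H}-|s-t|^{2H})$. $t^n_i=i/2^n$. *)

theory Defs
  imports "HOL-Probability.Probability"
begin

definition centered_gaussian_rv :: "'a measure \<Rightarrow> ('a \<Rightarrow> real) \<Rightarrow> real \<Rightarrow> bool" where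
  "centered_gaussian_rv M Y v \<longleftrightarrow>
     Y \<in> borel_measurable M \<and>
     ((v = 0 \<and> (AE x in M. Y x = 0)) \<or>
      (v > 0 \<and> distributed M lborel Y (normal_density 0 (sqrt v))))"

definition fbm_cov :: "real \<Rightarrow> real \<Rightarrow> real \<Rightarrow> real" where
  "fbm_cov H s t = (\<bar>s\<bar> powr (2*H) + \<bar>t\<bar> powr (2*H) - \<bar>s - t\<bar> powr (2*H)) / 2"

text \<open>B is a fractional Brownian motion on [0,1] with Hurst index H on the probability space M:
  a centered Gaussian process (every finite linear combination is centered Gaussian),
  B 0 = 0, and covariance fbm_cov H.\<close>
definition is_fbm :: "'a measure \<Rightarrow> real \<Rightarrow> (real \<Rightarrow> 'a \<Rightarrow> real) \<Rightarrow> bool" where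
  "is_fbm M H B \<longleftrightarrow>
     prob_space M \<and>
     (\<forall>t\<in>{0..1}. B t \<in> borel_measurable M) \<and>
     (AE x in M. B 0 x = 0) \<and>
     (\<forall>I c. finite I \<and> I \<subseteq> {0..1} \<longrightarrow>
        (\<exists>v. centered_gaussian_rv M (\<lambda>x. \<Sum>t\<in>I. c t * B t x) v)) \<and>
     (\<forall>s\<in>{0..1}. \<forall>t\<in>{0..1}. integrable M (\<lambda>x. B s x * B t x) \<and>
        (\<integral>x. B s x * B t x \<partial>M) = fbm_cov H s t)"

definition dyadic :: "nat \<Rightarrow> nat \<Rightarrow> real" where
  "dyadic n i = real i / 2 ^ n"

definition gen_sigma :: "'a measure \<Rightarrow> (real \<Rightarrow> 'a \<Rightarrow> real) \<Rightarrow> real set \<Rightarrow> 'a measure" where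
  "gen_sigma M B T = sigma (space M) {B t -` A \<inter> space M | t A. t \<in> T \<and> A \<in> sets borel}"

definition cond_var :: "'a measure \<Rightarrow> 'a measure \<Rightarrow> ('a \<Rightarrow> real) \<Rightarrow> 'a \<Rightarrow> real" where
  "cond_var M F X = real_cond_exp M F (\<lambda>x. (X x - real_cond_exp M F X x)\<^sup>2)"

end

theory Submission
  imports Defs
begin

lemma fourier_pos:
  fixes M :: "'a measure" and p q :: "'a \<Rightarrow> real" and V :: "'a \<Rightarrow> real"
  assumes M: "prob_space M" and V[measurable]: "V \<in> borel_measurable M"
    and ip: "integrable M p" and iq: "integrable M q"
    and p0: "\<And>x. 0 \<le> p x" and q0: "\<And>x. 0 \<le> q x"
    and eq: "\<And>s. (\<integral>x. complex_of_real (p x) * iexp (s * V x) \<partial>M) = (\<integral>x. complex_of_real (q x) * iexp (s * V x) \<partial>M)"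
    and A[measurable]: "A \<in> sets borel"
  shows "(\<integral>x. p x * indicator A (V x) \<partial>M) = (\<integral>x. q x * indicator A (V x) \<partial>M)"
proof -
  interpret prob_space M by fact
  have [measurable]: "p \<in> borel_measurable M" "q \<in> borel_measurable M" using ip iq by auto
  have c: "(\<integral>x. p x \<partial>M) = (\<integral>x. q x \<partial>M)"
    using eq[of 0] by simp
  define c where "c = (\<integral>x. p x \<partial>M)"
  have c0: "c \<ge> 0" unfolding c_def using p0 by (simp add: integral_nonneg_AE)
  show ?thesis
  proof (cases "c = 0")
    case True
    have "AE x in M. p x = 0" using True ip p0 unfolding c_def
      by (subst (asm) integral_nonneg_eq_0_iff_AE) auto
    moreover have "(\<integral>x. q x \<partial>M) = 0" using True c unfolding c_def by simp
    hence "AE x in M. q x = 0" using iq q0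
      by (subst (asm) integral_nonneg_eq_0_iff_AE) auto
    ultimately show ?thesis
      by (subst integral_cong_AE[where g="\<lambda>_. 0"], auto)+
  next
    case False
    hence cpos: "c > 0" using c0 by simp
    define N where "N = (\<lambda>r::'a\<Rightarrow>real. distr (density M (\<lambda>x. r x / c)) borel V)"
    have chN: "char (N r) s = (\<integral>x. complex_of_real (r x) * iexp (s * V x) \<partial>M) / c"
      if [measurable]: "r \<in> borel_measurable M" and r0: "\<And>x. 0 \<le> r x" for r s
    proof -
      have "char (N r) s = (\<integral>y. iexp (s * y) \<partial>N r)" unfolding char_def by simp
      also have "\<dots> = (\<integral>x. iexp (s * V x) \<partial>density M (\<lambda>x. r x / c))"
        unfolding N_def by (subst integral_distr) auto
      also have "\<dots> = (\<integral>x. (r x / c) *\<^sub>R iexp (s * V x) \<partial>M)"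
        by (subst integral_density) (auto simp: r0 cpos intro!: AE_I2 divide_nonneg_pos)
      also have "\<dots> = (\<integral>x. complex_of_real (r x) * iexp (s * V x) / c \<partial>M)"
        by (simp add: scaleR_conv_of_real mult.commute)
      also have "\<dots> = (\<integral>x. complex_of_real (r x) * iexp (s * V x) \<partial>M) / c"
        by simp
      finally show ?thesis .
    qed
    have rd: "real_distribution (N r)"
      if [measurable]: "r \<in> borel_measurable M" and r0: "\<And>x. 0 \<le> r x" and ir: "integrable M r"
        and rc: "(\<integral>x. r x \<partial>M) = c" for r
    proof -
      have "emeasure (density M (\<lambda>x. r x / c)) (space M) = (\<integral>\<^sup>+x. ennreal (r x / c) \<partial>M)"
        by (subst emeasure_density) auto
      also have "\<dots> = ennreal (\<integral>x. r x / c \<partial>M)"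
        by (subst nn_integral_eq_integral) (auto simp: r0 cpos ir intro!: AE_I2 divide_nonneg_pos)
      also have "\<dots> = 1" using rc cpos by simp
      finally have "prob_space (density M (\<lambda>x. r x / c))"
        by (intro prob_spaceI) simp
      hence "prob_space (N r)" unfolding N_def
        by (intro prob_space.prob_space_distr) auto
      thus ?thesis unfolding real_distribution_def real_distribution_axioms_def N_def by simp
    qed
    have "N p = N q"
      apply (rule Levy_uniqueness)
      apply (rule rd; (simp add: p0 ip c_def)?)
      apply (rule rd; (simp add: q0 iq c_def c)?)
      apply (rule ext)
      apply (subst chN, simp, simp add: p0)
      apply (subst chN, simp, simp add: q0)
      using eq by simp
    note Neq = this
    have Nint:  "(\<integral>y. (indicator A y::real) \<partial>N r) = (\<integral>x. r x * indicator A (V x) \<partial>M) / c"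
      if [measurable]: "r \<in> borel_measurable M" and r0: "\<And>x. 0 \<le> r x" for r
    proof -
      have "(\<integral>y. (indicator A y::real) \<partial>N r) = (\<integral>x. indicator A (V x) \<partial>density M (\<lambda>x. r x / c))"
        unfolding N_def by (subst integral_distr[where f="indicator A"]) (auto simp del: indicator_simps)
      also have "\<dots> = (\<integral>x. (r x / c) * indicator A (V x) \<partial>M)"
        by (subst integral_density) (auto simp: r0 cpos intro!: AE_I2 divide_nonneg_pos)
      also have "\<dots> = (\<integral>x. r x * indicator A (V x) \<partial>M) / c" by simp
      finally show ?thesis .
    qed
    have "(\<integral>x. p x * indicator A (V x) \<partial>M) / c = (\<integral>x. q x * indicator A (V x) \<partial>M) / c"
      using Nint[of p] Nint[of q] Neq p0 q0 by simp
    thus ?thesis using cpos by simp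
  qed
qed

lemma integrable_iexp_mult:
  fixes h :: "'a \<Rightarrow> complex"
  assumes "integrable M h" and [measurable]: "V \<in> borel_measurable M"
  shows "integrable M (\<lambda>x. h x * iexp (s * V x))"
proof (rule Bochner_Integration.integrable_bound[OF assms(1)])
  show "(\<lambda>x. h x * iexp (s * V x)) \<in> borel_measurable M" using assms(1) by measurable
  show "AE x in M. norm (h x * iexp (s * V x)) \<le> norm (h x)"
    by (intro AE_I2) (simp add: norm_mult)
qed

lemma integrable_mult_ind:
  fixes f :: "'a \<Rightarrow> 'b::{real_normed_field, banach, second_countable_topology}"
  assumes "integrable M f" and [measurable]: "V \<in> borel_measurable M" "A \<in> sets borel"
  shows "integrable M (\<lambda>x. f x * indicator A (V x))"
proof (rule Bochner_Integration.integrable_bound[OF assms(1)])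
  show "(\<lambda>x. f x * indicator A (V x)) \<in> borel_measurable M" using assms(1) by measurable
  show "AE x in M. norm (f x * indicator A (V x)) \<le> norm (f x)"
    by (intro AE_I2) (simp add: norm_mult indicator_def)
qed

lemma fourier_real:
  fixes M :: "'a measure" and w :: "'a \<Rightarrow> real" and V :: "'a \<Rightarrow> real"
  assumes M: "prob_space M" and V[measurable]: "V \<in> borel_measurable M"
    and iw: "integrable M w"
    and eq: "\<And>s. (\<integral>x. complex_of_real (w x) * iexp (s * V x) \<partial>M) = 0"
    and A[measurable]: "A \<in> sets borel"
  shows "(\<integral>x. w x * indicator A (V x) \<partial>M) = 0"
proof -
  define p where "p = (\<lambda>x. max (w x) 0)"
  define q where "q = (\<lambda>x. max (- w x) 0)"
  have ip: "integrable M p" and iq: "integrable M q" unfolding p_def q_def using iw by auto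
  have wpq: "w x = p x - q x" for x unfolding p_def q_def by auto
  have "(\<integral>x. complex_of_real (p x) * iexp (s * V x) \<partial>M) = (\<integral>x. complex_of_real (q x) * iexp (s * V x) \<partial>M)" for s
  proof -
    have "(\<integral>x. complex_of_real (p x) * iexp (s * V x) \<partial>M) - (\<integral>x. complex_of_real (q x) * iexp (s * V x) \<partial>M)
       = (\<integral>x. complex_of_real (p x) * iexp (s * V x) - complex_of_real (q x) * iexp (s * V x) \<partial>M)"
      by (rule Bochner_Integration.integral_diff[symmetric]; rule integrable_iexp_mult; (simp add: ip iq)?)
    also have "\<dots> = (\<integral>x. complex_of_real (w x) * iexp (s * V x) \<partial>M)"
      by (rule Bochner_Integration.integral_cong) (auto simp: wpq algebra_simps)
    finally show ?thesis using eq[of s] by simp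
  qed
  hence "(\<integral>x. p x * indicator A (V x) \<partial>M) = (\<integral>x. q x * indicator A (V x) \<partial>M)"
    by (intro fourier_pos[OF M V ip iq]) (auto simp: p_def q_def)
  moreover have "(\<integral>x. w x * indicator A (V x) \<partial>M) = (\<integral>x. p x * indicator A (V x) \<partial>M) - (\<integral>x. q x * indicator A (V x) \<partial>M)"
    apply (subst Bochner_Integration.integral_diff[symmetric])
    using ip iq apply (auto intro!: integrable_mult_ind simp: wpq left_diff_distrib)
    done
  ultimately show ?thesis by simp
qed

lemma re_mult_eq: "complex_of_real (Re z) * e = (z * e + cnj z * e) / 2"
proof -
  have "z * e + cnj z * e = (z + cnj z) * e" by (simp add: distrib_right)
  thus ?thesis by (simp add: complex_add_cnj)
qed

lemma im_mult_eq: "complex_of_real (Im z) * e = (z * e - cnj z * e) / (2 * \<i>)"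
proof -
  have "z * e - cnj z * e = (z - cnj z) * e" by (simp add: left_diff_distrib)
  moreover have "(2 * \<i>) * (complex_of_real (Im z) * e) = (z - cnj z) * e"
    by (simp add: complex_diff_cnj)
  ultimately show ?thesis by (simp add: field_simps)
qed

lemma fourier_complex:
  fixes M :: "'a measure" and h :: "'a \<Rightarrow> complex" and V :: "'a \<Rightarrow> real"
  assumes M: "prob_space M" and V[measurable]: "V \<in> borel_measurable M"
    and ih: "integrable M h"
    and eq: "\<And>s. (\<integral>x. h x * iexp (s * V x) \<partial>M) = 0"
    and A[measurable]: "A \<in> sets borel"
  shows "(\<integral>x. h x * indicator A (V x) \<partial>M) = 0"
proof -
  have ic: "integrable M (\<lambda>x. cnj (h x))" using ih by (rule integrable_bounded_linear[OF bounded_linear_cnj])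
  have c0: "(\<integral>x. cnj (h x) * iexp (s * V x) \<partial>M) = 0" for s
  proof -
    have "(\<integral>x. cnj (h x) * iexp (s * V x) \<partial>M) = (\<integral>x. cnj (h x * iexp (- s * V x)) \<partial>M)"
      by (rule Bochner_Integration.integral_cong) (auto simp: exp_cnj)
    also have "\<dots> = cnj (\<integral>x. h x * iexp (- s * V x) \<partial>M)" by (rule Bochner_Integration.integral_cnj)
    finally show ?thesis using eq[of "-s"] by simp
  qed
  have re: "(\<integral>x. complex_of_real (Re (h x)) * iexp (s * V x) \<partial>M) = 0" for s
  proof -
    have "(\<integral>x. complex_of_real (Re (h x)) * iexp (s * V x) \<partial>M)
        = (\<integral>x. (h x * iexp (s * V x) + cnj (h x) * iexp (s * V x)) / 2 \<partial>M)"
      by (rule Bochner_Integration.integral_cong) (auto simp: re_mult_eq)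
    also have "\<dots> = ((\<integral>x. h x * iexp (s * V x) \<partial>M) + (\<integral>x. cnj (h x) * iexp (s * V x) \<partial>M)) / 2"
      apply (subst integral_divide_zero)
      apply (subst Bochner_Integration.integral_add)
        apply (rule integrable_iexp_mult[OF ih V])
       apply (rule integrable_iexp_mult[OF ic V])
      apply (rule refl)
      done
    finally show ?thesis using eq[of s] c0[of s] by simp
  qed
  have im: "(\<integral>x. complex_of_real (Im (h x)) * iexp (s * V x) \<partial>M) = 0" for s
  proof -
    have "(\<integral>x. complex_of_real (Im (h x)) * iexp (s * V x) \<partial>M)
        = (\<integral>x. (h x * iexp (s * V x) - cnj (h x) * iexp (s * V x)) / (2 * \<i>) \<partial>M)"
      by (rule Bochner_Integration.integral_cong) (auto simp: im_mult_eq)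
    also have "\<dots> = ((\<integral>x. h x * iexp (s * V x) \<partial>M) - (\<integral>x. cnj (h x) * iexp (s * V x) \<partial>M)) / (2 * \<i>)"
      apply (subst integral_divide_zero)
      apply (subst Bochner_Integration.integral_diff)
        apply (rule integrable_iexp_mult[OF ih V])
       apply (rule integrable_iexp_mult[OF ic V])
      apply (rule refl)
      done
    finally show ?thesis using eq[of s] c0[of s] by simp
  qed
  have iRe: "integrable M (\<lambda>x. Re (h x))" using ih by (rule integrable_bounded_linear[OF bounded_linear_Re])
  have iIm: "integrable M (\<lambda>x. Im (h x))" using ih by (rule integrable_bounded_linear[OF bounded_linear_Im])
  have r0: "(\<integral>x. Re (h x) * indicator A (V x) \<partial>M) = 0"
    by (rule fourier_real[OF M V iRe re A])
  have i0: "(\<integral>x. Im (h x) * indicator A (V x) \<partial>M) = 0"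
    by (rule fourier_real[OF M V iIm im A])
  have "(\<integral>x. h x * indicator A (V x) \<partial>M) = (\<integral>x. complex_of_real (Re (h x) * indicator A (V x)) + \<i> * complex_of_real (Im (h x) * indicator A (V x)) \<partial>M)"
    by (rule Bochner_Integration.integral_cong) (auto simp: indicator_def complex_eq_iff)
  also have "\<dots> = complex_of_real (\<integral>x. Re (h x) * indicator A (V x) \<partial>M) + \<i> * complex_of_real (\<integral>x. Im (h x) * indicator A (V x) \<partial>M)"
    by (subst Bochner_Integration.integral_add)
       (auto intro!: integrable_mult_ind iRe iIm integrable_of_real simp del: of_real_mult)
  finally show ?thesis using r0 i0 by simp
qed

lemma gauss_char:
  assumes M: "prob_space M" and G: "centered_gaussian_rv M W v"
  shows "(\<integral>x. iexp (W x) \<partial>M) = complex_of_real (exp (- v / 2))"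
proof -
  interpret prob_space M by fact
  have Wm[measurable]: "W \<in> borel_measurable M" using G unfolding centered_gaussian_rv_def by simp
  consider "v = 0" "AE x in M. W x = 0" | "v > 0" "distributed M lborel W (normal_density 0 (sqrt v))"
    using G unfolding centered_gaussian_rv_def by auto
  thus ?thesis
  proof cases
    case 1
    have "(\<integral>x. iexp (W x) \<partial>M) = (\<integral>x. 1 \<partial>M)"
      by (rule integral_cong_AE) (use 1 in auto)
    thus ?thesis using 1 by (simp add: prob_space)
  next
    case 2
    define \<sigma> where "\<sigma> = sqrt v"
    have sp: "\<sigma> > 0" using 2 unfolding \<sigma>_def by simp
    have D: "distributed M lborel (\<lambda>x. (W x - 0) / \<sigma>) std_normal_density"
      using normal_standard_normal_convert[OF sp] 2 unfolding \<sigma>_def by simp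
    have eqd: "distr M lborel (\<lambda>x. (W x - 0) / \<sigma>) = std_normal_distribution"
      using distributed_distr_eq_density[OF D] by simp
    have "char std_normal_distribution \<sigma> = (\<integral>y. iexp (\<sigma> * y) \<partial>distr M lborel (\<lambda>x. (W x - 0) / \<sigma>))"
      unfolding char_def eqd by simp
    also have "\<dots> = (\<integral>x. iexp (\<sigma> * ((W x - 0) / \<sigma>)) \<partial>M)"
      by (subst integral_distr) auto
    also have "\<dots> = (\<integral>x. iexp (W x) \<partial>M)" using sp by simp
    finally have "(\<integral>x. iexp (W x) \<partial>M) = complex_of_real (exp (- (\<sigma>^2) / 2))"
      by (simp add: char_std_normal_distribution)
    thus ?thesis using 2 unfolding \<sigma>_def by simp
  qed
qed

lemma gauss_var:
  assumes M: "prob_space M" and G: "centered_gaussian_rv M W v"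
  shows "(\<integral>x. (W x)^2 \<partial>M) = v"
proof -
  interpret prob_space M by fact
  have Wm[measurable]: "W \<in> borel_measurable M" using G unfolding centered_gaussian_rv_def by simp
  consider "v = 0" "AE x in M. W x = 0" | "v > 0" "distributed M lborel W (normal_density 0 (sqrt v))"
    using G unfolding centered_gaussian_rv_def by auto
  thus ?thesis
  proof cases
    case 1
    have "(\<integral>x. (W x)^2 \<partial>M) = (\<integral>x. 0 \<partial>M)"
      by (rule integral_cong_AE) (use 1 in auto)
    thus ?thesis using 1 by simp
  next
    case 2
    have sp: "sqrt v > 0" using 2 by simp
    have "expectation W = 0" using normal_distributed_expectation[OF sp 2(2)] .
    moreover have "variance W = (sqrt v)^2" using normal_distributed_variance[OF sp 2(2)] .
    ultimately show ?thesis using 2 by simp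
  qed
qed

lemma gauss_mean:
  assumes M: "prob_space M" and G: "centered_gaussian_rv M W v"
  shows "(\<integral>x. W x \<partial>M) = 0"
proof -
  interpret prob_space M by fact
  have Wm[measurable]: "W \<in> borel_measurable M" using G unfolding centered_gaussian_rv_def by simp
  consider "v = 0" "AE x in M. W x = 0" | "v > 0" "distributed M lborel W (normal_density 0 (sqrt v))"
    using G unfolding centered_gaussian_rv_def by auto
  thus ?thesis
  proof cases
    case 1
    have "(\<integral>x. W x \<partial>M) = (\<integral>x. 0 \<partial>M)"
      by (rule integral_cong_AE) (use 1 in auto)
    thus ?thesis by simp
  next
    case 2
    have sp: "sqrt v > 0" using 2 by simp
    show ?thesis using normal_distributed_expectation[OF sp 2(2)] by simp
  qed
qed

definition unitv :: "real \<Rightarrow> real \<Rightarrow> real" where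
  "unitv \<sigma> = (\<lambda>\<tau>. if \<tau> = \<sigma> then 1 else 0)"

locale semi_ip =
  fixes Q :: "(real \<Rightarrow> real) \<Rightarrow> (real \<Rightarrow> real) \<Rightarrow> real"
  assumes lin: "\<And>a b c r s. Q (\<lambda>\<tau>. r * a \<tau> + s * b \<tau>) c = r * Q a c + s * Q b c"
    and sym: "\<And>a b. Q a b = Q b a"
    and psd: "\<And>a. Q a a \<ge> 0"
begin

lemma zero_left: "Q (\<lambda>\<tau>. 0) c = 0"
proof -
  have "Q (\<lambda>\<tau>. 0 * c \<tau> + 0 * c \<tau>) c = 0 * Q c c + 0 * Q c c" by (rule lin)
  thus ?thesis by simp
qed

lemma diff_left: "Q (\<lambda>\<tau>. a \<tau> - b \<tau>) c = Q a c - Q b c"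
proof -
  have "Q (\<lambda>\<tau>. 1 * a \<tau> + (-1) * b \<tau>) c = 1 * Q a c + (-1) * Q b c" by (rule lin)
  thus ?thesis by simp
qed

lemma add_left: "Q (\<lambda>\<tau>. a \<tau> + b \<tau>) c = Q a c + Q b c"
proof -
  have "Q (\<lambda>\<tau>. 1 * a \<tau> + 1 * b \<tau>) c = 1 * Q a c + 1 * Q b c" by (rule lin)
  thus ?thesis by simp
qed

lemma scale_left: "Q (\<lambda>\<tau>. r * a \<tau>) c = r * Q a c"
proof -
  have "Q (\<lambda>\<tau>. r * a \<tau> + 0 * a \<tau>) c = r * Q a c + 0 * Q a c" by (rule lin)
  thus ?thesis by simp
qed

lemma sum_left:
  assumes "finite S"
  shows "Q (\<lambda>\<tau>. \<Sum>\<sigma>\<in>S. p \<sigma> * unitv \<sigma> \<tau>) c = (\<Sum>\<sigma>\<in>S. p \<sigma> * Q (unitv \<sigma>) c)"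
  using assms
proof (induction S rule: finite_induct)
  case empty
  then show ?case using zero_left by simp
next
  case (insert x F)
  have "Q (\<lambda>\<tau>. \<Sum>\<sigma>\<in>insert x F. p \<sigma> * unitv \<sigma> \<tau>) c = Q (\<lambda>\<tau>. p x * unitv x \<tau> + 1 * (\<Sum>\<sigma>\<in>F. p \<sigma> * unitv \<sigma> \<tau>)) c"
    using insert by simp
  also have "\<dots> = p x * Q (unitv x) c + 1 * Q (\<lambda>\<tau>. \<Sum>\<sigma>\<in>F. p \<sigma> * unitv \<sigma> \<tau>) c"
    by (rule lin)
  also have "\<dots> = p x * Q (unitv x) c + (\<Sum>\<sigma>\<in>F. p \<sigma> * Q (unitv \<sigma>) c)"
    using insert.IH by simp
  also have "\<dots> = (\<Sum>\<sigma>\<in>insert x F. p \<sigma> * Q (unitv \<sigma>) c)"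
    using insert.hyps by simp
  finally show ?case .
qed

lemma supp_expand:
  assumes "finite S" "\<forall>\<tau>. \<tau> \<notin> S \<longrightarrow> p \<tau> = 0"
  shows "p = (\<lambda>\<tau>. \<Sum>\<sigma>\<in>S. p \<sigma> * unitv \<sigma> \<tau>)"
proof
  fix \<tau>
  have "(\<Sum>\<sigma>\<in>S. p \<sigma> * unitv \<sigma> \<tau>) = (\<Sum>\<sigma>\<in>S. if \<tau> = \<sigma> then p \<sigma> else 0)"
    unfolding unitv_def by (rule sum.cong) auto
  also have "\<dots> = (if \<tau> \<in> S then p \<tau> else 0)" using assms(1) by (simp add: sum.delta)
  finally show "p \<tau> = (\<Sum>\<sigma>\<in>S. p \<sigma> * unitv \<sigma> \<tau>)" using assms(2) by auto
qed

lemma orth_supp: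
  assumes "finite S" "\<forall>\<tau>. \<tau> \<notin> S \<longrightarrow> p \<tau> = 0" "\<forall>\<sigma>\<in>S. Q y (unitv \<sigma>) = 0"
  shows "Q p y = 0" "Q y p = 0"
proof -
  have "Q p y = Q (\<lambda>\<tau>. \<Sum>\<sigma>\<in>S. p \<sigma> * unitv \<sigma> \<tau>) y"
    by (rule arg_cong[where f="\<lambda>f. Q f y", OF supp_expand[OF assms(1,2)]])
  also have "\<dots> = (\<Sum>\<sigma>\<in>S. p \<sigma> * Q (unitv \<sigma>) y)" by (rule sum_left[OF assms(1)])
  also have "\<dots> = 0"
  proof -
    have "\<forall>\<sigma>\<in>S. Q (unitv \<sigma>) y = 0" using assms(3) sym by metis
    thus ?thesis by simp
  qed
  finally show "Q p y = 0" .
  thus "Q y p = 0" by (metis sym)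
qed

lemma cs_zero:
  assumes "Q r r = 0"
  shows "Q r y = 0"
proof -
  define b where "b = Q r y"
  define c where "c = Q y y"
  have c0: "c \<ge> 0" unfolding c_def by (rule psd)
  have expand: "Q (\<lambda>\<tau>. 1 * r \<tau> + l * y \<tau>) (\<lambda>\<tau>. 1 * r \<tau> + l * y \<tau>) = 2 * l * b + l^2 * c" for l
  proof -
    have "Q (\<lambda>\<tau>. 1 * r \<tau> + l * y \<tau>) (\<lambda>\<tau>. 1 * r \<tau> + l * y \<tau>)
        = 1 * Q r (\<lambda>\<tau>. 1 * r \<tau> + l * y \<tau>) + l * Q y (\<lambda>\<tau>. 1 * r \<tau> + l * y \<tau>)" by (rule lin)
    also have "Q r (\<lambda>\<tau>. 1 * r \<tau> + l * y \<tau>) = 1 * Q r r + l * Q r y"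
      by (metis lin sym)
    also have "Q y (\<lambda>\<tau>. 1 * r \<tau> + l * y \<tau>) = 1 * Q y r + l * Q y y"
      by (metis lin sym)
    finally show ?thesis using assms sym[of y r] unfolding b_def c_def by (simp add: power2_eq_square algebra_simps)
  qed
  define l where "l = - b / (c + 1)"
  have "0 \<le> 2 * l * b + l^2 * c" using psd expand by metis
  have lc: "l * (c + 1) = - b" unfolding l_def using c0 by simp
  have "(2 * l * b + l^2 * c) * (c+1)^2 = 2 * b * (l * (c+1)) * (c+1) + c * (l * (c+1))^2"
    by (simp add: algebra_simps power2_eq_square)
  also have "\<dots> = -(b^2 * (c + 2))" unfolding lc by (simp add: algebra_simps power2_eq_square)
  finally have "0 \<le> -(b^2 * (c + 2))" using \<open>0 \<le> 2 * l * b + l^2 * c\<close> c0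
    by (metis mult_nonneg_nonneg zero_le_power2)
  hence "b^2 * (c+2) \<le> 0" by simp
  hence "b^2 \<le> 0" using c0 by (simp add: mult_le_0_iff)
  thus ?thesis unfolding b_def by simp
qed

lemma projection:
  assumes "finite S"
  shows "\<exists>p. (\<forall>\<tau>. \<tau> \<notin> S \<longrightarrow> p \<tau> = 0) \<and> (\<forall>\<sigma>\<in>S. Q (\<lambda>\<tau>. x \<tau> - p \<tau>) (unitv \<sigma>) = 0)"
  using assms
proof (induction S arbitrary: x rule: finite_induct)
  case empty
  show ?case by (rule exI[of _ "\<lambda>_. 0"]) simp
next
  case (insert s0 S)
  obtain px where px: "\<forall>\<tau>. \<tau> \<notin> S \<longrightarrow> px \<tau> = 0" "\<forall>\<sigma>\<in>S. Q (\<lambda>\<tau>. x \<tau> - px \<tau>) (unitv \<sigma>) = 0"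
    using insert.IH by blast
  obtain pe where pe: "\<forall>\<tau>. \<tau> \<notin> S \<longrightarrow> pe \<tau> = 0" "\<forall>\<sigma>\<in>S. Q (\<lambda>\<tau>. unitv s0 \<tau> - pe \<tau>) (unitv \<sigma>) = 0"
    using insert.IH by blast
  define r where "r = (\<lambda>\<tau>. unitv s0 \<tau> - pe \<tau>)"
  define x' where "x' = (\<lambda>\<tau>. x \<tau> - px \<tau>)"
  have r_orth: "\<forall>\<sigma>\<in>S. Q r (unitv \<sigma>) = 0" using pe unfolding r_def by simp
  have x_orth: "\<forall>\<sigma>\<in>S. Q x' (unitv \<sigma>) = 0" using px unfolding x'_def by simp
  have us0: "unitv s0 = (\<lambda>\<tau>. r \<tau> + pe \<tau>)" unfolding r_def by auto
  show ?case
  proof (cases "Q r r = 0")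
    case True
    show ?thesis
    proof (rule exI[of _ px], intro conjI ballI allI impI)
      show "px \<tau> = 0" if "\<tau> \<notin> insert s0 S" for \<tau> using px that by auto
      fix \<sigma> assume "\<sigma> \<in> insert s0 S"
      then consider "\<sigma> = s0" | "\<sigma> \<in> S" by auto
      thus "Q (\<lambda>\<tau>. x \<tau> - px \<tau>) (unitv \<sigma>) = 0"
      proof cases
        case 1
        have "Q (unitv s0) x' = Q r x' + Q pe x'" by (subst us0) (rule add_left)
        hence "Q x' (unitv s0) = Q x' r + Q x' pe" by (metis sym)
        also have "Q x' r = 0" using cs_zero[OF True] by (metis sym)
        also have "Q x' pe = 0" using orth_supp(2)[OF insert(1) pe(1) x_orth] .
        finally show ?thesis using 1 unfolding x'_def by simp
      next
        case 2 thus ?thesis using px by simp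
      qed
    qed
  next
    case False
    define l where "l = Q x' r / Q r r"
    define p where "p = (\<lambda>\<tau>. px \<tau> + l * r \<tau>)"
    have xp: "(\<lambda>\<tau>. x \<tau> - p \<tau>) = (\<lambda>\<tau>. 1 * x' \<tau> + (- l) * r \<tau>)"
      unfolding p_def x'_def by (rule ext) (simp add: algebra_simps)
    have xpl: "Q (\<lambda>\<tau>. x \<tau> - p \<tau>) c = Q x' c - l * Q r c" for c
    proof -
      have "Q (\<lambda>\<tau>. 1 * x' \<tau> + (- l) * r \<tau>) c = 1 * Q x' c + (- l) * Q r c" by (rule lin)
      thus ?thesis unfolding xp by simp
    qed
    have y_orth: "\<forall>\<sigma>\<in>S. Q (\<lambda>\<tau>. x \<tau> - p \<tau>) (unitv \<sigma>) = 0"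
      using r_orth x_orth by (simp add: xpl)
    show ?thesis
    proof (rule exI[of _ p], intro conjI ballI allI impI)
      show "p \<tau> = 0" if "\<tau> \<notin> insert s0 S" for \<tau>
        using px pe that unfolding p_def r_def unitv_def by auto
      fix \<sigma> assume "\<sigma> \<in> insert s0 S"
      then consider "\<sigma> = s0" | "\<sigma> \<in> S" by auto
      thus "Q (\<lambda>\<tau>. x \<tau> - p \<tau>) (unitv \<sigma>) = 0"
      proof cases
        case 1
        have "Q (unitv s0) (\<lambda>\<tau>. x \<tau> - p \<tau>) = Q r (\<lambda>\<tau>. x \<tau> - p \<tau>) + Q pe (\<lambda>\<tau>. x \<tau> - p \<tau>)"
          by (subst us0) (rule add_left)
        hence "Q (\<lambda>\<tau>. x \<tau> - p \<tau>) (unitv s0) = Q (\<lambda>\<tau>. x \<tau> - p \<tau>) r + Q (\<lambda>\<tau>. x \<tau> - p \<tau>) pe"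
          by (metis sym)
        also have "Q (\<lambda>\<tau>. x \<tau> - p \<tau>) pe = 0" using orth_supp(2)[OF insert(1) pe(1) y_orth] .
        also have "Q (\<lambda>\<tau>. x \<tau> - p \<tau>) r = Q x' r - l * Q r r"
          by (rule xpl)
        also have "\<dots> = 0" unfolding l_def using False by simp
        finally show ?thesis using 1 by simp
      next
        case 2 thus ?thesis using y_orth by simp
      qed
    qed
  qed
qed

end

definition comb :: "(real \<Rightarrow> 'a \<Rightarrow> real) \<Rightarrow> real set \<Rightarrow> (real \<Rightarrow> real) \<Rightarrow> 'a \<Rightarrow> real" where
  "comb B T a x = (\<Sum>\<tau>\<in>T. a \<tau> * B \<tau> x)"

definition Qf :: "real \<Rightarrow> real set \<Rightarrow> (real \<Rightarrow> real) \<Rightarrow> (real \<Rightarrow> real) \<Rightarrow> real" where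
  "Qf H T a b = (\<Sum>\<sigma>\<in>T. \<Sum>\<tau>\<in>T. a \<sigma> * b \<tau> * fbm_cov H \<sigma> \<tau>)"

lemma fbm_cov_sym: "fbm_cov H s t = fbm_cov H t s"
  unfolding fbm_cov_def by (simp add: abs_minus_commute)

locale fbm_setup =
  fixes M :: "'a measure" and H :: real and B :: "real \<Rightarrow> 'a \<Rightarrow> real" and T :: "real set"
  assumes fbm: "is_fbm M H B" and finT: "finite T" and Tsub: "T \<subseteq> {0..1}"
begin

lemma prob: "prob_space M" using fbm unfolding is_fbm_def by simp

sublocale prob_space M by (rule prob)

lemma Bm: "\<tau> \<in> {0..1} \<Longrightarrow> B \<tau> \<in> borel_measurable M"
  using fbm unfolding is_fbm_def by simp

lemma BmT: "\<tau> \<in> T \<Longrightarrow> B \<tau> \<in> borel_measurable M"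
  using Bm Tsub by auto

lemma Bint: "s \<in> {0..1} \<Longrightarrow> t \<in> {0..1} \<Longrightarrow> integrable M (\<lambda>x. B s x * B t x) \<and> (\<integral>x. B s x * B t x \<partial>M) = fbm_cov H s t"
  using fbm unfolding is_fbm_def by simp

lemma BintT:
  assumes "s \<in> T" "t \<in> T"
  shows "integrable M (\<lambda>x. B s x * B t x) \<and> (\<integral>x. B s x * B t x \<partial>M) = fbm_cov H s t"
proof -
  have "s \<in> {0..1}" "t \<in> {0..1}" using Tsub assms by auto
  thus ?thesis by (rule Bint)
qed

lemma comb_meas[measurable]: "comb B T a \<in> borel_measurable M"
proof -
  have "(\<lambda>x. \<Sum>\<tau>\<in>T. a \<tau> * B \<tau> x) \<in> borel_measurable M"
    by (rule borel_measurable_sum) (use BmT in auto)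
  thus ?thesis unfolding comb_def[abs_def] .
qed

lemma comb_prod:
  "integrable M (\<lambda>x. comb B T a x * comb B T b x) \<and> (\<integral>x. comb B T a x * comb B T b x \<partial>M) = Qf H T a b"
proof -
  have eq: "comb B T a x * comb B T b x = (\<Sum>\<sigma>\<in>T. \<Sum>\<tau>\<in>T. (a \<sigma> * b \<tau>) * (B \<sigma> x * B \<tau> x))" for x
    unfolding comb_def sum_product by (intro sum.cong refl) (simp add: algebra_simps)
  have i: "integrable M (\<lambda>x. \<Sum>\<sigma>\<in>T. \<Sum>\<tau>\<in>T. (a \<sigma> * b \<tau>) * (B \<sigma> x * B \<tau> x))"
    using BintT by (auto intro!: Bochner_Integration.integrable_sum integrable_mult_right)
  have "(\<integral>x. (\<Sum>\<sigma>\<in>T. \<Sum>\<tau>\<in>T. (a \<sigma> * b \<tau>) * (B \<sigma> x * B \<tau> x)) \<partial>M) = (\<Sum>\<sigma>\<in>T. \<Sum>\<tau>\<in>T. (a \<sigma> * b \<tau>) * fbm_cov H \<sigma> \<tau>)"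
    using BintT
    by (subst Bochner_Integration.integral_sum, force intro!: Bochner_Integration.integrable_sum integrable_mult_right)
       (auto intro!: sum.cong simp: Bochner_Integration.integral_sum)
  with i show ?thesis unfolding eq Qf_def by simp
qed

lemma comb_sq_int: "integrable M (\<lambda>x. (comb B T a x)^2)"
  using comb_prod[of a a] by (simp add: power2_eq_square)

lemma Qf_sq: "Qf H T a a = (\<integral>x. (comb B T a x)^2 \<partial>M)"
  using comb_prod[of a a] by (simp add: power2_eq_square)

lemma semi: "semi_ip (Qf H T)"
proof
  fix a b c :: "real \<Rightarrow> real" and r s :: real
  show "Qf H T (\<lambda>\<tau>. r * a \<tau> + s * b \<tau>) c = r * Qf H T a c + s * Qf H T b c"
    unfolding Qf_def by (simp add: sum_distrib_left sum.distrib algebra_simps)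
next
  fix a b :: "real \<Rightarrow> real"
  show "Qf H T a b = Qf H T b a"
    unfolding Qf_def by (subst sum.swap) (simp add: fbm_cov_sym mult.commute)
next
  fix a :: "real \<Rightarrow> real"
  show "Qf H T a a \<ge> 0" unfolding Qf_sq by simp
qed

lemma comb_gauss: "\<exists>v. centered_gaussian_rv M (comb B T a) v"
  using fbm finT Tsub unfolding is_fbm_def comb_def[abs_def] by blast

lemma comb_char: "(\<integral>x. iexp (comb B T a x) \<partial>M) = complex_of_real (exp (- Qf H T a a / 2))"
proof -
  obtain v where g: "centered_gaussian_rv M (comb B T a) v" using comb_gauss by blast
  have "v = Qf H T a a" using gauss_var[OF prob g] Qf_sq by simp
  thus ?thesis using gauss_char[OF prob g] by simp
qed

lemma comb_lin: "comb B T (\<lambda>\<tau>. a \<tau> + s * b \<tau>) x = comb B T a x + s * comb B T b x"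
  unfolding comb_def by (simp add: sum.distrib sum_distrib_left algebra_simps)

end

definition restr :: "real set \<Rightarrow> (real \<Rightarrow> real) \<Rightarrow> real \<Rightarrow> real" where
  "restr D u = (\<lambda>\<tau>. if \<tau> \<in> D then u \<tau> else 0)"

definition Pind :: "(real \<Rightarrow> 'a \<Rightarrow> real) \<Rightarrow> real set \<Rightarrow> (real \<Rightarrow> real set) \<Rightarrow> 'a \<Rightarrow> real" where
  "Pind B D A x = (\<Prod>\<sigma>\<in>D. indicator (A \<sigma>) (B \<sigma> x))"

lemma Pind_bounds: "0 \<le> Pind B D A x" "Pind B D A x \<le> 1"
  unfolding Pind_def by (auto intro!: prod_nonneg prod_le_1)

lemma abs_Pind: "\<bar>Pind B D A x\<bar> \<le> 1"
  using Pind_bounds[of B D A x] by simp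

lemma norm_Pind: "norm (complex_of_real (Pind B D A x)) \<le> 1"
  using Pind_bounds[of B D A x] by simp

locale indep_setup = fbm_setup +
  fixes S :: "real set" and z :: "real \<Rightarrow> real"
  assumes SsubT: "S \<subseteq> T" and orth: "\<forall>\<sigma>\<in>S. Qf H T z (unitv \<sigma>) = 0"
begin

interpretation Q: semi_ip "Qf H T" by (rule semi)

lemma finS: "finite S" using finite_subset[OF SsubT finT] .

abbreviation "Z \<equiv> comb B T z"
abbreviation "\<phi> s \<equiv> exp (- (s^2 * Qf H T z z) / 2)"

lemma Pind_meas:
  assumes "D \<subseteq> T" "\<forall>\<sigma>\<in>D. A \<sigma> \<in> sets borel"
  shows "Pind B D A \<in> borel_measurable M"
proof -
  have "(\<lambda>x. \<Prod>\<sigma>\<in>D. (indicator (A \<sigma>) (B \<sigma> x) :: real)) \<in> borel_measurable M"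
  proof (rule borel_measurable_prod)
    fix \<sigma> assume "\<sigma> \<in> D"
    hence "B \<sigma> \<in> borel_measurable M" "A \<sigma> \<in> sets borel" using assms BmT by auto
    thus "(\<lambda>x. indicator (A \<sigma>) (B \<sigma> x) :: real) \<in> borel_measurable M" by measurable
  qed
  thus ?thesis unfolding Pind_def[abs_def] .
qed

lemma iexp_add: "iexp a * iexp b = iexp (a + b)"
  by (simp add: exp_add[symmetric] distrib_left)

lemma bnd_int:
  assumes "f \<in> borel_measurable M" "\<And>x. norm (f x) \<le> C"
  shows "integrable M (f :: 'a \<Rightarrow> complex)"
  using assms by (intro integrable_const_bound[where B=C]) auto

lemma comb_unitv:
  assumes "a \<in> T" shows "comb B T (unitv a) x = B a x"
proof -
  have "comb B T (unitv a) x = (\<Sum>\<tau>\<in>T. if a = \<tau> then B \<tau> x else 0)"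
    unfolding comb_def by (intro sum.cong) (auto simp: unitv_def)
  also have "\<dots> = B a x" using finT assms by (simp add: sum.delta)
  finally show ?thesis .
qed

lemma base:
  assumes "\<forall>\<tau>. \<tau> \<notin> S \<longrightarrow> u \<tau> = 0"
  shows "(\<integral>x. iexp (comb B T u x) * iexp (s * Z x) \<partial>M) = (\<integral>x. iexp (comb B T u x) \<partial>M) * \<phi> s"
proof -
  have uz: "Qf H T u z = 0" using Q.orth_supp(1)[OF finS assms] orth by simp
  have "Qf H T (\<lambda>\<tau>. 1 * u \<tau> + s * z \<tau>) (\<lambda>\<tau>. 1 * u \<tau> + s * z \<tau>)
     = 1 * Qf H T u (\<lambda>\<tau>. 1 * u \<tau> + s * z \<tau>) + s * Qf H T z (\<lambda>\<tau>. 1 * u \<tau> + s * z \<tau>)"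
    by (rule Q.lin)
  also have "Qf H T u (\<lambda>\<tau>. 1 * u \<tau> + s * z \<tau>) = 1 * Qf H T u u + s * Qf H T u z"
    by (metis Q.lin Q.sym)
  also have "Qf H T z (\<lambda>\<tau>. 1 * u \<tau> + s * z \<tau>) = 1 * Qf H T z u + s * Qf H T z z"
    by (metis Q.lin Q.sym)
  finally have qq: "Qf H T (\<lambda>\<tau>. u \<tau> + s * z \<tau>) (\<lambda>\<tau>. u \<tau> + s * z \<tau>) = Qf H T u u + s^2 * Qf H T z z"
    using uz Q.sym[of z u] by (simp add: power2_eq_square)
  have "(\<integral>x. iexp (comb B T u x) * iexp (s * Z x) \<partial>M) = (\<integral>x. iexp (comb B T (\<lambda>\<tau>. u \<tau> + s * z \<tau>) x) \<partial>M)"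
  proof -
    have "iexp (comb B T u x) * iexp (s * Z x) = iexp (comb B T (\<lambda>\<tau>. u \<tau> + s * z \<tau>) x)" for x
      by (simp only: iexp_add comb_lin)
    thus ?thesis by (simp only:)
  qed
  also have "\<dots> = complex_of_real (exp (- Qf H T u u / 2) * \<phi> s)"
    unfolding comb_char qq by (simp add: exp_add[symmetric] field_simps)
  also have "\<dots> = (\<integral>x. iexp (comb B T u x) \<partial>M) * \<phi> s"
    unfolding comb_char by simp
  finally show ?thesis .
qed

lemma nP: "norm (complex_of_real (Pind B D A x) * w) \<le> norm w"
  using norm_Pind[of B D A x] by (simp add: norm_mult mult_left_le_one_le)

lemma indep_ind:
  assumes "D \<subseteq> S"
  shows "\<forall>A. (\<forall>\<sigma>\<in>D. A \<sigma> \<in> sets borel) \<longrightarrow> (\<forall>u s.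
    (\<integral>x. complex_of_real (Pind B D A x) * iexp (comb B T (restr (S - D) u) x) * iexp (s * Z x) \<partial>M)
    = (\<integral>x. complex_of_real (Pind B D A x) * iexp (comb B T (restr (S - D) u) x) \<partial>M) * \<phi> s)"
  using finite_subset[OF assms finS] assms
proof (induction D rule: finite_induct)
  case empty
  show ?case
  proof (intro allI impI)
    fix A :: "real \<Rightarrow> real set" and u s
    have "\<forall>\<tau>. \<tau> \<notin> S \<longrightarrow> restr (S - {}) u \<tau> = 0" unfolding restr_def by simp
    from base[OF this, of s]
    show "(\<integral>x. complex_of_real (Pind B {} A x) * iexp (comb B T (restr (S - {}) u) x) * iexp (s * Z x) \<partial>M)
    = (\<integral>x. complex_of_real (Pind B {} A x) * iexp (comb B T (restr (S - {}) u) x) \<partial>M) * \<phi> s"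
      unfolding Pind_def by simp
  qed
next
  case (insert a D)
  have aS: "a \<in> S" and DS: "D \<subseteq> S" using insert by auto
  have aT: "a \<in> T" and DT: "D \<subseteq> T" using aS DS SsubT by auto
  show ?case
  proof (intro allI impI)
    fix A :: "real \<Rightarrow> real set" and u s
    assume A: "\<forall>\<sigma>\<in>insert a D. A \<sigma> \<in> sets borel"
    hence AD: "\<forall>\<sigma>\<in>D. A \<sigma> \<in> sets borel" and Aa: "A a \<in> sets borel" by auto
    have IH: "\<And>u s. (\<integral>x. complex_of_real (Pind B D A x) * iexp (comb B T (restr (S - D) u) x) * iexp (s * Z x) \<partial>M)
      = (\<integral>x. complex_of_real (Pind B D A x) * iexp (comb B T (restr (S - D) u) x) \<partial>M) * \<phi> s"
      using insert.IH DS AD by blast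
    define u1 where "u1 = restr (S - insert a D) u"
    define P where "P = (\<lambda>x. complex_of_real (Pind B D A x))"
    define h where "h = (\<lambda>x. P x * iexp (comb B T u1 x) * (iexp (s * Z x) - \<phi> s))"
    have Pm[measurable]: "Pind B D A \<in> borel_measurable M" by (rule Pind_meas[OF DT AD])
    have Ba[measurable]: "B a \<in> borel_measurable M" by (rule BmT[OF aT])
    have Pm'[measurable]: "P \<in> borel_measurable M" unfolding P_def by measurable
    have restr_eq: "restr (S - D) (u(a := r)) = (\<lambda>\<tau>. u1 \<tau> + r * unitv a \<tau>)" for r
      using aS insert.hyps(2) by (auto simp: restr_def unitv_def u1_def)
    have combr: "comb B T (restr (S - D) (u(a := r))) x = comb B T u1 x + r * B a x" for r x
      unfolding restr_eq comb_lin comb_unitv[OF aT] ..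
    have hm[measurable]: "h \<in> borel_measurable M" unfolding h_def by measurable
    have hint: "integrable M h"
    proof (rule bnd_int[OF hm])
      fix x
      have "norm (h x) = norm (P x) * norm (iexp (s * Z x) - \<phi> s)"
        unfolding h_def by (simp add: norm_mult)
      also have "\<dots> \<le> 1 * norm (iexp (s * Z x) - \<phi> s)"
        using norm_Pind[of B D A x] unfolding P_def by (intro mult_right_mono) auto
      also have "\<dots> \<le> 1 + \<phi> s"
        using norm_triangle_ineq4[of "iexp (s * Z x)" "complex_of_real (\<phi> s)"] by simp
      finally show "norm (h x) \<le> 1 + \<phi> s" .
    qed
    have F0: "(\<integral>x. h x * iexp (r * B a x) \<partial>M) = 0" for r
    proof -
      let ?c = "\<lambda>x. comb B T (restr (S - D) (u(a := r))) x"
      have pw: "h x * iexp (r * B a x) = P x * iexp (?c x) * iexp (s * Z x) - P x * iexp (?c x) * \<phi> s" for x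
      proof -
        have e: "iexp (comb B T u1 x) * iexp (r * B a x) = iexp (?c x)" unfolding combr by (rule iexp_add)
        have "h x * iexp (r * B a x) = P x * (iexp (comb B T u1 x) * iexp (r * B a x)) * (iexp (s * Z x) - \<phi> s)"
          unfolding h_def by (simp only: mult_ac)
        hence "h x * iexp (r * B a x) = P x * iexp (?c x) * (iexp (s * Z x) - \<phi> s)"
          by (simp only: e)
        thus ?thesis by (simp add: algebra_simps)
      qed
      have i1: "integrable M (\<lambda>x. P x * iexp (?c x) * iexp (s * Z x))"
        by (rule bnd_int[where C=1], measurable) (simp add: P_def norm_mult abs_Pind)
      have i2: "integrable M (\<lambda>x. P x * iexp (?c x))"
        by (rule bnd_int[where C=1], measurable) (simp add: P_def norm_mult abs_Pind)
      have "(\<integral>x. h x * iexp (r * B a x) \<partial>M) = (\<integral>x. P x * iexp (?c x) * iexp (s * Z x) \<partial>M) - (\<integral>x. P x * iexp (?c x) * \<phi> s \<partial>M)"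
        unfolding pw by (rule Bochner_Integration.integral_diff[OF i1]) (rule integrable_mult_left[OF i2])
      also have "(\<integral>x. P x * iexp (?c x) * \<phi> s \<partial>M) = (\<integral>x. P x * iexp (?c x) \<partial>M) * \<phi> s"
        by (rule integral_mult_left_zero)
      finally have X: "(\<integral>x. h x * iexp (r * B a x) \<partial>M) = (\<integral>x. P x * iexp (?c x) * iexp (s * Z x) \<partial>M) - (\<integral>x. P x * iexp (?c x) \<partial>M) * \<phi> s" .
      have Y: "(\<integral>x. P x * iexp (?c x) * iexp (s * Z x) \<partial>M) = (\<integral>x. P x * iexp (?c x) \<partial>M) * \<phi> s"
        unfolding P_def by (rule IH)
      show ?thesis unfolding X Y by (rule diff_self)
    qed
    have G0: "(\<integral>x. h x * indicator (A a) (B a x) \<partial>M) = 0"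
      by (rule fourier_complex[OF prob Ba hint F0 Aa])
    have Pins: "complex_of_real (Pind B (insert a D) A x) = P x * indicator (A a) (B a x)" for x
      unfolding P_def Pind_def using insert.hyps by (simp add: mult.commute indicator_def)
    let ?L = "\<lambda>x. complex_of_real (Pind B (insert a D) A x) * iexp (comb B T u1 x)"
    have pw2: "h x * indicator (A a) (B a x) = ?L x * iexp (s * Z x) - ?L x * \<phi> s" for x
      unfolding h_def Pins by (simp add: algebra_simps)
    have PmI[measurable]: "Pind B (insert a D) A \<in> borel_measurable M"
      by (rule Pind_meas) (use aT DT A in auto)
    have i3: "integrable M (\<lambda>x. ?L x * iexp (s * Z x))"
      by (rule bnd_int[where C=1], measurable) (simp add: norm_mult abs_Pind)
    have i4: "integrable M ?L"
      by (rule bnd_int[where C=1], measurable) (simp add: norm_mult abs_Pind)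
    have "(\<integral>x. ?L x * iexp (s * Z x) \<partial>M) - (\<integral>x. ?L x \<partial>M) * \<phi> s = 0"
      using G0 unfolding pw2
      by (subst (asm) Bochner_Integration.integral_diff[OF i3 integrable_mult_left[OF i4]])
         (simp add: integral_mult_left_zero)
    thus "(\<integral>x. complex_of_real (Pind B (insert a D) A x) * iexp (comb B T (restr (S - insert a D) u) x) * iexp (s * Z x) \<partial>M)
        = (\<integral>x. complex_of_real (Pind B (insert a D) A x) * iexp (comb B T (restr (S - insert a D) u) x) \<partial>M) * \<phi> s"
      unfolding u1_def by simp
  qed
qed

lemma Z_char: "(\<integral>x. iexp (s * Z x) \<partial>M) = \<phi> s"
proof -
  have c: "comb B T (\<lambda>\<tau>. s * z \<tau>) x = s * Z x" for x
    unfolding comb_def by (simp add: sum_distrib_left mult.assoc)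
  have q: "Qf H T (\<lambda>\<tau>. s * z \<tau>) (\<lambda>\<tau>. s * z \<tau>) = s^2 * Qf H T z z"
    using Q.scale_left[of s z "\<lambda>\<tau>. s * z \<tau>"] Q.scale_left[of s z z] Q.sym[of z "\<lambda>\<tau>. s * z \<tau>"]
    by (simp add: power2_eq_square)
  show ?thesis using comb_char[of "\<lambda>\<tau>. s * z \<tau>"] unfolding c q by simp
qed

lemma indep_pi:
  assumes A: "\<forall>\<sigma>\<in>S. A \<sigma> \<in> sets borel" and f[measurable]: "f \<in> borel_measurable borel"
  shows "(\<integral>x. Pind B S A x * f (Z x) \<partial>M) = (\<integral>x. Pind B S A x \<partial>M) * (\<integral>x. f (Z x) \<partial>M)"
proof -
  have Pm[measurable]: "Pind B S A \<in> borel_measurable M" by (rule Pind_meas[OF SsubT A])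
  have Zm[measurable]: "Z \<in> borel_measurable M" by simp
  define c where "c = (\<integral>x. Pind B S A x \<partial>M)"
  have c0: "c \<ge> 0" unfolding c_def by (intro integral_nonneg_AE AE_I2 Pind_bounds(1))
  have iP: "integrable M (Pind B S A)"
    by (rule integrable_const_bound[where B=1]) (auto simp: abs_Pind)
  have ch: "(\<integral>x. complex_of_real (Pind B S A x) * iexp (s * Z x) \<partial>M) = complex_of_real c * \<phi> s" for s
  proof -
    have r0: "comb B T (restr (S - S) u) x = 0" for u x unfolding comb_def restr_def by simp
    have "(\<integral>x. complex_of_real (Pind B S A x) * iexp (comb B T (restr (S - S) (\<lambda>_. 0)) x) * iexp (s * Z x) \<partial>M)
      = (\<integral>x. complex_of_real (Pind B S A x) * iexp (comb B T (restr (S - S) (\<lambda>_. 0)) x) \<partial>M) * \<phi> s"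
      using indep_ind[OF order_refl] A by blast
    thus ?thesis unfolding r0 c_def by simp
  qed
  have w0: "(\<integral>x. complex_of_real (Pind B S A x - c) * iexp (s * Z x) \<partial>M) = 0" for s
  proof -
    have i1: "integrable M (\<lambda>x. complex_of_real (Pind B S A x) * iexp (s * Z x))"
      by (rule bnd_int[where C=1], measurable) (simp add: norm_mult abs_Pind)
    have i2: "integrable M (\<lambda>x. complex_of_real c * iexp (s * Z x))"
      by (rule bnd_int[where C="c"], measurable) (simp add: norm_mult c0)
    have "(\<integral>x. complex_of_real (Pind B S A x - c) * iexp (s * Z x) \<partial>M)
       = (\<integral>x. complex_of_real (Pind B S A x) * iexp (s * Z x) - complex_of_real c * iexp (s * Z x) \<partial>M)"
      by (rule Bochner_Integration.integral_cong) (auto simp: algebra_simps)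
    also have "\<dots> = complex_of_real c * \<phi> s - complex_of_real c * \<phi> s"
    proof -
      have "(\<integral>x. complex_of_real c * iexp (s * Z x) \<partial>M) = complex_of_real c * \<phi> s"
        by (simp only: integral_mult_right_zero Z_char)
      thus ?thesis unfolding Bochner_Integration.integral_diff[OF i1 i2] ch by (simp only:)
    qed
    finally show ?thesis by simp
  qed
  have iw: "integrable M (\<lambda>x. Pind B S A x - c)" using iP by auto
  have ind: "(\<integral>x. Pind B S A x * indicator A0 (Z x) \<partial>M) = (\<integral>x. c * indicator A0 (Z x) \<partial>M)"
    if A0[measurable]: "A0 \<in> sets borel" for A0
  proof -
    have "integrable M (\<lambda>x. indicator A0 (Z x) :: real)"
      by (rule integrable_const_bound[where B=1]) auto
    have "(\<integral>x. (Pind B S A x - c) * indicator A0 (Z x) \<partial>M) = 0"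
      by (rule fourier_real[OF prob Zm iw w0 A0])
    moreover have "(\<integral>x. (Pind B S A x - c) * indicator A0 (Z x) \<partial>M)
       = (\<integral>x. Pind B S A x * indicator A0 (Z x) \<partial>M) - (\<integral>x. c * indicator A0 (Z x) \<partial>M)"
      by (subst Bochner_Integration.integral_diff[symmetric])
         (auto intro!: integrable_mult_ind iP simp: left_diff_distrib \<open>integrable M (\<lambda>x. indicator A0 (Z x) :: real)\<close>)
    ultimately show ?thesis by simp
  qed
  define \<mu>1 where "\<mu>1 = distr (density M (Pind B S A)) borel Z"
  define \<mu>2 where "\<mu>2 = distr (density M (\<lambda>_. c)) borel Z"
  have "\<mu>1 = \<mu>2"
  proof (rule measure_eqI)
    show "sets \<mu>1 = sets \<mu>2" unfolding \<mu>1_def \<mu>2_def by simp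
    fix A0 assume "A0 \<in> sets \<mu>1"
    hence A0[measurable]: "A0 \<in> sets borel" unfolding \<mu>1_def by simp
    have "emeasure \<mu>1 A0 = (\<integral>\<^sup>+x. ennreal (Pind B S A x) * indicator (Z -` A0 \<inter> space M) x \<partial>M)"
      unfolding \<mu>1_def by (simp add: emeasure_distr emeasure_density)
    also have "\<dots> = (\<integral>\<^sup>+x. ennreal (Pind B S A x * indicator A0 (Z x)) \<partial>M)"
      by (intro nn_integral_cong) (auto simp: indicator_def)
    also have "\<dots> = ennreal (\<integral>x. Pind B S A x * indicator A0 (Z x) \<partial>M)"
      by (intro nn_integral_eq_integral integrable_mult_ind iP) (auto simp: Pind_bounds)
    also have "\<dots> = ennreal (\<integral>x. c * indicator A0 (Z x) \<partial>M)" using ind[OF A0] by simp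
    also have "\<dots> = (\<integral>\<^sup>+x. ennreal (c * indicator A0 (Z x)) \<partial>M)"
      by (intro nn_integral_eq_integral[symmetric] integrable_mult_ind) (auto simp: c0)
    also have "\<dots> = (\<integral>\<^sup>+x. ennreal c * indicator (Z -` A0 \<inter> space M) x \<partial>M)"
      by (intro nn_integral_cong) (auto simp: indicator_def)
    also have "\<dots> = emeasure \<mu>2 A0"
      unfolding \<mu>2_def by (simp add: emeasure_distr emeasure_density)
    finally show "emeasure \<mu>1 A0 = emeasure \<mu>2 A0" .
  qed
  hence "(\<integral>y. f y \<partial>\<mu>1) = (\<integral>y. f y \<partial>\<mu>2)" by simp
  moreover have "(\<integral>y. f y \<partial>\<mu>1) = (\<integral>x. Pind B S A x * f (Z x) \<partial>M)"
    unfolding \<mu>1_def by (subst integral_distr) (auto simp: integral_density Pind_bounds)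
  moreover have "(\<integral>y. f y \<partial>\<mu>2) = (\<integral>x. c * f (Z x) \<partial>M)"
    unfolding \<mu>2_def by (subst integral_distr) (auto simp: integral_density c0)
  ultimately show ?thesis unfolding c_def by simp
qed

end

context indep_setup
begin

abbreviation "\<Omega> \<equiv> space M"
abbreviation "F \<equiv> gen_sigma M B S"
definition "Gen = {B t -` A \<inter> space M | t A. t \<in> S \<and> A \<in> sets borel}"
definition "Epi = {{x\<in>space M. \<forall>\<sigma>\<in>S. B \<sigma> x \<in> A \<sigma>} | A. \<forall>\<sigma>\<in>S. A \<sigma> \<in> sets borel}"

lemma BmS: "\<sigma> \<in> S \<Longrightarrow> B \<sigma> \<in> borel_measurable M" using BmT SsubT by auto

lemma Gen_Pow: "Gen \<subseteq> Pow \<Omega>" unfolding Gen_def by auto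

lemma sets_F: "sets F = sigma_sets \<Omega> Gen" and space_F: "space F = \<Omega>"
  unfolding gen_sigma_def Gen_def[symmetric] using Gen_Pow
  by (simp_all add: sets_measure_of space_measure_of)

lemma Gen_sub: "Gen \<subseteq> sets M"
  unfolding Gen_def using BmS by (auto simp: measurable_sets)

lemma subalg: "subalgebra M F"
  unfolding subalgebra_def space_F sets_F using sets.sigma_sets_subset[OF Gen_sub] by simp

lemma BmF: "\<sigma> \<in> S \<Longrightarrow> B \<sigma> \<in> borel_measurable F"
proof (rule measurableI)
  fix x assume "x \<in> space F" thus "B \<sigma> x \<in> space borel" by simp
next
  fix A :: "real set" assume "A \<in> sets borel" "\<sigma> \<in> S"
  hence "B \<sigma> -` A \<inter> \<Omega> \<in> Gen" unfolding Gen_def by blast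
  thus "B \<sigma> -` A \<inter> space F \<in> sets F" unfolding sets_F space_F by auto
qed

lemma Epi_F: "Epi \<subseteq> sets F"
proof
  fix X assume "X \<in> Epi"
  then obtain A where X: "X = {x\<in>space M. \<forall>\<sigma>\<in>S. B \<sigma> x \<in> A \<sigma>}" and A: "\<forall>\<sigma>\<in>S. A \<sigma> \<in> sets borel"
    unfolding Epi_def by blast
  have "{x\<in>space F. \<forall>\<sigma>\<in>S. B \<sigma> x \<in> A \<sigma>} \<in> sets F"
  proof (rule sets.sets_Collect_finite_All[OF _ finS])
    fix \<sigma> assume s: "\<sigma> \<in> S"
    have "{x \<in> space F. B \<sigma> x \<in> A \<sigma>} = B \<sigma> -` A \<sigma> \<inter> space F" by auto
    also have "\<dots> \<in> sets F" using measurable_sets[OF BmF[OF s]] A s by auto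
    finally show "{x \<in> space F. B \<sigma> x \<in> A \<sigma>} \<in> sets F" .
  qed
  thus "X \<in> sets F" unfolding X space_F .
qed

lemma Gen_Epi: "Gen \<subseteq> Epi"
proof
  fix X assume "X \<in> Gen"
  then obtain t A where X: "X = B t -` A \<inter> \<Omega>" and t: "t \<in> S" and A: "A \<in> sets borel"
    unfolding Gen_def by blast
  define A' where "A' = (\<lambda>\<sigma>. if \<sigma> = t then A else UNIV)"
  have "X = {x\<in>space M. \<forall>\<sigma>\<in>S. B \<sigma> x \<in> A' \<sigma>}" unfolding X A'_def using t by auto
  moreover have "\<forall>\<sigma>\<in>S. A' \<sigma> \<in> sets borel" unfolding A'_def using A by auto
  ultimately show "X \<in> Epi" unfolding Epi_def by blast
qed

lemma sets_F_Epi: "sets F = sigma_sets \<Omega> Epi"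
proof
  show "sets F \<subseteq> sigma_sets \<Omega> Epi" unfolding sets_F by (rule sigma_sets_subseteq[OF Gen_Epi])
  have "sigma_sets (space F) Epi \<subseteq> sets F" by (rule sets.sigma_sets_subset[OF Epi_F])
  thus "sigma_sets \<Omega> Epi \<subseteq> sets F" unfolding space_F .
qed

lemma Epi_Int: "Int_stable Epi"
proof (rule Int_stableI)
  fix X Y assume "X \<in> Epi" "Y \<in> Epi"
  then obtain A A' where X: "X = {x\<in>space M. \<forall>\<sigma>\<in>S. B \<sigma> x \<in> A \<sigma>}" and A: "\<forall>\<sigma>\<in>S. A \<sigma> \<in> sets borel"
    and Y: "Y = {x\<in>space M. \<forall>\<sigma>\<in>S. B \<sigma> x \<in> A' \<sigma>}" and A': "\<forall>\<sigma>\<in>S. A' \<sigma> \<in> sets borel"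
    unfolding Epi_def by blast
  have "X \<inter> Y = {x\<in>space M. \<forall>\<sigma>\<in>S. B \<sigma> x \<in> A \<sigma> \<inter> A' \<sigma>}" unfolding X Y by auto
  moreover have "\<forall>\<sigma>\<in>S. A \<sigma> \<inter> A' \<sigma> \<in> sets borel" using A A' by auto
  ultimately show "X \<inter> Y \<in> Epi" unfolding Epi_def by (intro CollectI exI[of _ "\<lambda>\<sigma>. A \<sigma> \<inter> A' \<sigma>"]) simp
qed

lemma Epi_Pow: "Epi \<subseteq> Pow \<Omega>" unfolding Epi_def by auto

lemma Omega_Epi: "\<Omega> \<in> Epi"
proof -
  have "\<Omega> = {x\<in>space M. \<forall>\<sigma>\<in>S. B \<sigma> x \<in> (\<lambda>_. UNIV) \<sigma>}" by simp
  thus ?thesis unfolding Epi_def by (intro CollectI exI[of _ "\<lambda>_. UNIV"]) simp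
qed

lemma ext_nonneg:
  assumes f[measurable]: "f \<in> borel_measurable borel" and f0: "\<And>y. f y \<ge> 0"
    and fi: "integrable M (\<lambda>x. f (Z x))" and AF: "A \<in> sets F"
  shows "(\<integral>x. indicator A x * f (Z x) \<partial>M) = measure M A * (\<integral>x. f (Z x) \<partial>M)"
proof -
  define K where "K = (\<integral>x. f (Z x) \<partial>M)"
  have K0: "K \<ge> 0" unfolding K_def using f0 by (simp add: integral_nonneg_AE)
  define N1 where "N1 = density M (\<lambda>x. ennreal (f (Z x)))"
  define N2 where "N2 = density M (\<lambda>x. ennreal K)"
  have sub1: "subalgebra N1 F" and sub2: "subalgebra N2 F"
    using subalg unfolding N1_def N2_def subalgebra_def by auto
  have em1: "emeasure N1 X = ennreal (\<integral>x. indicator X x * f (Z x) \<partial>M)" if X: "X \<in> sets M" for X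
  proof -
    have "emeasure N1 X = (\<integral>\<^sup>+x. ennreal (f (Z x)) * indicator X x \<partial>M)"
      unfolding N1_def using X by (simp add: emeasure_density)
    also have "\<dots> = (\<integral>\<^sup>+x. ennreal (indicator X x * f (Z x)) \<partial>M)"
      by (intro nn_integral_cong) (auto simp: indicator_def)
    also have "\<dots> = ennreal (\<integral>x. indicator X x * f (Z x) \<partial>M)"
      using X fi integrable_mult_indicator[OF X fi] by (intro nn_integral_eq_integral) (auto simp: f0)
    finally show ?thesis .
  qed
  have em2: "emeasure N2 X = ennreal (measure M X * K)" if X: "X \<in> sets M" for X
  proof -
    have "emeasure N2 X = (\<integral>\<^sup>+x. ennreal K * indicator X x \<partial>M)"
      unfolding N2_def using X by (simp add: emeasure_density)
    also have "\<dots> = ennreal K * emeasure M X" using X by (simp add: nn_integral_cmult)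
    also have "\<dots> = ennreal (measure M X * K)"
      by (simp add: emeasure_eq_measure ennreal_mult'' K0 mult.commute)
    finally show ?thesis .
  qed
  have "restr_to_subalg N1 F = restr_to_subalg N2 F"
  proof (rule measure_eqI_generator_eq[OF Epi_Int Epi_Pow, where A="\<lambda>_. \<Omega>"])
    fix X assume XE: "X \<in> Epi"
    hence XF: "X \<in> sets F" using Epi_F by auto
    hence XM: "X \<in> sets M" using subalg unfolding subalgebra_def by auto
    obtain Af where X: "X = {x\<in>space M. \<forall>\<sigma>\<in>S. B \<sigma> x \<in> Af \<sigma>}" and Af: "\<forall>\<sigma>\<in>S. Af \<sigma> \<in> sets borel"
      using XE unfolding Epi_def by blast
    have ind: "indicator X x = Pind B S Af x" if "x \<in> \<Omega>" for x
      unfolding X Pind_def using that finS by (auto simp: indicator_def)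
    have "(\<integral>x. indicator X x * f (Z x) \<partial>M) = (\<integral>x. Pind B S Af x * f (Z x) \<partial>M)"
      by (intro Bochner_Integration.integral_cong) (auto simp: ind)
    also have "\<dots> = (\<integral>x. Pind B S Af x \<partial>M) * K" unfolding K_def by (rule indep_pi[OF Af f])
    also have "(\<integral>x. Pind B S Af x \<partial>M) = (\<integral>x. indicator X x \<partial>M)"
      by (intro Bochner_Integration.integral_cong) (auto simp: ind)
    also have "\<dots> = measure M X" using XM by simp
    finally have eq: "(\<integral>x. indicator X x * f (Z x) \<partial>M) = measure M X * K" .
    show "emeasure (restr_to_subalg N1 F) X = emeasure (restr_to_subalg N2 F) X"
      using emeasure_restr_to_subalg[OF sub1 XF] emeasure_restr_to_subalg[OF sub2 XF] em1[OF XM] em2[OF XM] eq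
      by simp
  next
    show "sets (restr_to_subalg N1 F) = sigma_sets \<Omega> Epi" using sets_restr_to_subalg[OF sub1] sets_F_Epi by simp
    show "sets (restr_to_subalg N2 F) = sigma_sets \<Omega> Epi" using sets_restr_to_subalg[OF sub2] sets_F_Epi by simp
    show "range (\<lambda>_. \<Omega>) \<subseteq> Epi" using Omega_Epi by auto
    show "(\<Union>i::nat. \<Omega>) = \<Omega>" by simp
    show "emeasure (restr_to_subalg N1 F) \<Omega> \<noteq> \<infinity>" for i :: nat
      using emeasure_restr_to_subalg[OF sub1 sets.top[of F]] em1[OF sets.top[of M]] unfolding space_F by simp
  qed
  hence "emeasure (restr_to_subalg N1 F) A = emeasure (restr_to_subalg N2 F) A" by simp
  hence "emeasure N1 A = emeasure N2 A"
    using emeasure_restr_to_subalg[OF sub1 AF] emeasure_restr_to_subalg[OF sub2 AF] by simp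
  moreover have AM: "A \<in> sets M" using AF subalg unfolding subalgebra_def by auto
  ultimately have "ennreal (\<integral>x. indicator A x * f (Z x) \<partial>M) = ennreal (measure M A * K)"
    using em1 em2 by simp
  moreover have "(\<integral>x. indicator A x * f (Z x) \<partial>M) \<ge> 0" using f0 by (simp add: integral_nonneg_AE)
  moreover have "measure M A * K \<ge> 0" using K0 by simp
  ultimately have "(\<integral>x. indicator A x * f (Z x) \<partial>M) = measure M A * K" by (metis ennreal_inj)
  thus ?thesis unfolding K_def .
qed

end

context fbm_setup
begin

lemma comb_mean: "(\<integral>x. comb B T a x \<partial>M) = 0"
  using comb_gauss[of a] gauss_mean[OF prob] by blast

lemma comb_int: "integrable M (comb B T a)"
  by (rule square_integrable_imp_integrable[OF comb_meas comb_sq_int])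

end

context indep_setup
begin

lemma final_ce:
  assumes tT: "t \<in> T" and psupp: "\<forall>\<tau>. \<tau> \<notin> S \<longrightarrow> p \<tau> = 0" and zdef: "z = (\<lambda>\<tau>. unitv t \<tau> - p \<tau>)"
  shows "AE x in M. cond_var M F (B t) x = Qf H T z z"
proof -
  have sfs: "sigma_finite_subalgebra M F"
    by (rule finite_measure_subalgebra_is_sigma_finite) (unfold_locales, rule subalg)
  interpret CE: sigma_finite_subalgebra M F by (rule sfs)
  define L where "L = (\<lambda>x. \<Sum>\<sigma>\<in>S. p \<sigma> * B \<sigma> x)"
  have Lc: "L x = comb B T p x" for x
    unfolding L_def comb_def using SsubT finT psupp
    by (intro sum.mono_neutral_left) auto
  have LF[measurable]: "L \<in> borel_measurable F"
    unfolding L_def by (rule borel_measurable_sum) (use BmF in auto)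
  have XZL: "B t x = L x + Z x" for x
  proof -
    have "Z x = (\<Sum>\<tau>\<in>T. unitv t \<tau> * B \<tau> x) - comb B T p x"
      unfolding zdef comb_def by (simp add: left_diff_distrib sum_subtractf)
    also have "(\<Sum>\<tau>\<in>T. unitv t \<tau> * B \<tau> x) = B t x"
      using comb_unitv[OF tT, of x] unfolding comb_def .
    finally show ?thesis using Lc by simp
  qed
  have Zm[measurable]: "Z \<in> borel_measurable M" by simp
  have Btm[measurable]: "B t \<in> borel_measurable M" using BmT[OF tT] .
  have iZ: "integrable M Z" by (rule comb_int)
  have "L = comb B T p" by (rule ext) (rule Lc)
  hence iL: "integrable M L" using comb_int[of p] by simp
  have "comb B T (unitv t) = B t" by (rule ext) (rule comb_unitv[OF tT])
  hence iX: "integrable M (B t)" using comb_int[of "unitv t"] by simp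
  have EZ: "(\<integral>x. Z x \<partial>M) = 0" by (rule comb_mean)
  have ZA: "(\<integral>x. indicator A x * Z x \<partial>M) = 0" if AF: "A \<in> sets F" for A
  proof -
    have AM: "A \<in> sets M" using AF subalg unfolding subalgebra_def by auto
    define f1 where "f1 = (\<lambda>y::real. max y 0)"
    define f2 where "f2 = (\<lambda>y::real. max (-y) 0)"
    have [measurable]: "f1 \<in> borel_measurable borel" "f2 \<in> borel_measurable borel"
      unfolding f1_def f2_def by measurable
    have i1: "integrable M (\<lambda>x. f1 (Z x))" unfolding f1_def using iZ by auto
    have i2: "integrable M (\<lambda>x. f2 (Z x))" unfolding f2_def using iZ by auto
    have sp: "Z x = f1 (Z x) - f2 (Z x)" for x unfolding f1_def f2_def by auto
    have e1: "(\<integral>x. indicator A x * f1 (Z x) \<partial>M) = measure M A * (\<integral>x. f1 (Z x) \<partial>M)"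
      by (rule ext_nonneg) (auto simp: f1_def i1[unfolded f1_def] AF)
    have e2: "(\<integral>x. indicator A x * f2 (Z x) \<partial>M) = measure M A * (\<integral>x. f2 (Z x) \<partial>M)"
      by (rule ext_nonneg) (auto simp: f2_def i2[unfolded f2_def] AF)
    have "(\<integral>x. indicator A x * Z x \<partial>M) = (\<integral>x. indicator A x * f1 (Z x) - indicator A x * f2 (Z x) \<partial>M)"
      by (intro Bochner_Integration.integral_cong refl) (subst sp, simp add: algebra_simps)
    also have "\<dots> = (\<integral>x. indicator A x * f1 (Z x) \<partial>M) - (\<integral>x. indicator A x * f2 (Z x) \<partial>M)"
      by (rule Bochner_Integration.integral_diff)
         (simp_all add: integrable_mult_indicator[OF AM i1, simplified] integrable_mult_indicator[OF AM i2, simplified])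
    also have "\<dots> = measure M A * ((\<integral>x. f1 (Z x) \<partial>M) - (\<integral>x. f2 (Z x) \<partial>M))"
      unfolding e1 e2 by (simp add: algebra_simps)
    also have "(\<integral>x. f1 (Z x) \<partial>M) - (\<integral>x. f2 (Z x) \<partial>M) = (\<integral>x. Z x \<partial>M)"
      by (subst Bochner_Integration.integral_diff[OF i1 i2, symmetric]) (simp add: sp[symmetric])
    finally show ?thesis using EZ by simp
  qed
  have ce1: "AE x in M. real_cond_exp M F (B t) x = L x"
  proof (rule CE.real_cond_exp_charact)
    fix A assume AF: "A \<in> sets F"
    have AM: "A \<in> sets M" using AF subalg unfolding subalgebra_def by auto
    have "(\<integral>x. indicator A x * B t x \<partial>M) = (\<integral>x. indicator A x * L x + indicator A x * Z x \<partial>M)"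
      by (simp add: XZL distrib_left)
    also have "\<dots> = (\<integral>x. indicator A x * L x \<partial>M) + (\<integral>x. indicator A x * Z x \<partial>M)"
      by (rule Bochner_Integration.integral_add)
         (simp_all add: integrable_mult_indicator[OF AM iL, simplified] integrable_mult_indicator[OF AM iZ, simplified])
    finally show "(\<integral>x\<in>A. B t x \<partial>M) = (\<integral>x\<in>A. L x \<partial>M)"
      unfolding set_lebesgue_integral_def using ZA[OF AF] by simp
  qed (use iX iL in auto)
  have ce2: "AE x in M. real_cond_exp M F (\<lambda>x. (B t x - real_cond_exp M F (B t) x)\<^sup>2) x = real_cond_exp M F (\<lambda>x. (Z x)\<^sup>2) x"
  proof (rule CE.real_cond_exp_cong)
    show "AE x in M. (B t x - real_cond_exp M F (B t) x)\<^sup>2 = (Z x)\<^sup>2"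
      using ce1 by eventually_elim (simp add: XZL)
  qed measurable
  have EZ2: "(\<integral>x. (Z x)\<^sup>2 \<partial>M) = Qf H T z z" using Qf_sq by simp
  have ce3: "AE x in M. real_cond_exp M F (\<lambda>x. (Z x)\<^sup>2) x = Qf H T z z"
  proof (rule CE.real_cond_exp_charact)
    fix A assume AF: "A \<in> sets F"
    have AM: "A \<in> sets M" using AF subalg unfolding subalgebra_def by auto
    have "(\<integral>x. indicator A x * (\<lambda>y. y\<^sup>2) (Z x) \<partial>M) = measure M A * (\<integral>x. (\<lambda>y. y\<^sup>2) (Z x) \<partial>M)"
      by (rule ext_nonneg) (auto simp: comb_sq_int AF)
    thus "(\<integral>x\<in>A. (Z x)\<^sup>2 \<partial>M) = (\<integral>x\<in>A. Qf H T z z \<partial>M)"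
      unfolding set_lebesgue_integral_def using AM EZ2 by (simp add: mult.commute)
  qed (auto simp: comb_sq_int)
  show ?thesis using ce2 ce3 unfolding cond_var_def by eventually_elim simp
qed

end

lemma (in fbm_setup) Qf_unitv:
  assumes "a \<in> T" "b \<in> T"
  shows "Qf H T (unitv a) (unitv b) = fbm_cov H a b"
proof -
  have inner: "(\<Sum>\<tau>\<in>T. unitv a \<sigma> * unitv b \<tau> * fbm_cov H \<sigma> \<tau>) = unitv a \<sigma> * fbm_cov H \<sigma> b" for \<sigma>
  proof -
    have "(\<Sum>\<tau>\<in>T. unitv a \<sigma> * unitv b \<tau> * fbm_cov H \<sigma> \<tau>) = (\<Sum>\<tau>\<in>T. if b = \<tau> then unitv a \<sigma> * fbm_cov H \<sigma> \<tau> else 0)"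
      by (intro sum.cong) (auto simp: unitv_def)
    also have "\<dots> = unitv a \<sigma> * fbm_cov H \<sigma> b" using finT assms by (simp add: sum.delta)
    finally show ?thesis .
  qed
  have "Qf H T (unitv a) (unitv b) = (\<Sum>\<sigma>\<in>T. unitv a \<sigma> * fbm_cov H \<sigma> b)"
    unfolding Qf_def inner ..
  also have "\<dots> = (\<Sum>\<sigma>\<in>T. if a = \<sigma> then fbm_cov H \<sigma> b else 0)"
    by (intro sum.cong) (auto simp: unitv_def)
  also have "\<dots> = fbm_cov H a b" using finT assms by (simp add: sum.delta)
  finally show ?thesis .
qed

lemma (in fbm_setup) Qf_diff_unitv:
  assumes "a \<in> T" "b \<in> T"
  shows "Qf H T (\<lambda>\<tau>. unitv a \<tau> - unitv b \<tau>) (\<lambda>\<tau>. unitv a \<tau> - unitv b \<tau>) = \<bar>a - b\<bar> powr (2 * H)"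
proof -
  interpret Q: semi_ip "Qf H T" by (rule semi)
  let ?w = "\<lambda>\<tau>. unitv a \<tau> - unitv b \<tau>"
  have "Qf H T ?w ?w = Qf H T (unitv a) ?w - Qf H T (unitv b) ?w" by (rule Q.diff_left)
  also have "Qf H T (unitv a) ?w = Qf H T (unitv a) (unitv a) - Qf H T (unitv b) (unitv a)"
    by (metis Q.diff_left Q.sym)
  also have "Qf H T (unitv b) ?w = Qf H T (unitv a) (unitv b) - Qf H T (unitv b) (unitv b)"
    by (metis Q.diff_left Q.sym)
  finally show ?thesis using assms
    by (simp add: Qf_unitv fbm_cov_def abs_minus_commute field_simps)
qed

theorem lemma1:
  fixes M :: "'a measure" and H :: real and B :: "real \<Rightarrow> 'a \<Rightarrow> real"
    and k j :: nat
  assumes "0 < H" "H < 1"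
    and "is_fbm M H B"
    and "k \<ge> 1" and "j < 2 ^ (k - 1)"
  shows "AE x in M.
     cond_var M (gen_sigma M B {dyadic (k - 1) i | i. i \<le> 2 ^ (k - 1)})
        (B (dyadic k (2 * j + 1))) x \<le> 2 * 2 powr (- 2 * real k * H)"
proof -
  obtain k' where k: "k = Suc k'" using assms(4) by (cases k) auto
  define S where "S = {dyadic (k - 1) i | i. i \<le> 2 ^ (k - 1)}"
  define t where "t = dyadic k (2 * j + 1)"
  define sj where "sj = dyadic (k - 1) j"
  define T where "T = insert t S"
  have Sim: "S = (\<lambda>i. dyadic (k - 1) i) ` {..2 ^ (k - 1)}" unfolding S_def by auto
  have finS: "finite S" unfolding Sim by simp
  have pow: "(2::real) ^ k = 2 * 2 ^ k'" using k by simp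
  have S01: "S \<subseteq> {0..1}"
  proof
    fix s assume "s \<in> S"
    then obtain i where s: "s = dyadic (k - 1) i" and i: "i \<le> 2 ^ (k - 1)" unfolding S_def by blast
    have "real i \<le> 2 ^ k'" using i k by (metis diff_Suc_1 of_nat_le_iff of_nat_numeral of_nat_power)
    thus "s \<in> {0..1}" unfolding s dyadic_def using k by simp
  qed
  have t01: "t \<in> {0..1}"
  proof -
    have "j < 2 ^ k'" using assms(5) k by simp
    hence "2 * j + 1 \<le> 2 * 2 ^ k'" by simp
    hence "real (2 * j + 1) \<le> 2 * 2 ^ k'" by (metis of_nat_le_iff of_nat_mult of_nat_numeral of_nat_power)
    thus ?thesis unfolding t_def dyadic_def pow by simp
  qed
  have sjS: "sj \<in> S" unfolding sj_def S_def using assms(5) by auto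
  have finT: "finite T" unfolding T_def using finS by simp
  have T01: "T \<subseteq> {0..1}" unfolding T_def using S01 t01 by simp
  have tT: "t \<in> T" and SsubT: "S \<subseteq> T" and sjT: "sj \<in> T" unfolding T_def using sjS by auto
  interpret fbm_setup M H B T using assms(3) finT T01 by unfold_locales
  interpret Q: semi_ip "Qf H T" by (rule semi)
  obtain p where psupp: "\<forall>\<tau>. \<tau> \<notin> S \<longrightarrow> p \<tau> = 0"
    and porth: "\<forall>\<sigma>\<in>S. Qf H T (\<lambda>\<tau>. unitv t \<tau> - p \<tau>) (unitv \<sigma>) = 0"
    using Q.projection[OF finS, of "unitv t"] by blast
  define z where "z = (\<lambda>\<tau>. unitv t \<tau> - p \<tau>)"
  interpret indep_setup M H B T S z
    using SsubT porth unfolding z_def by unfold_locales auto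
  have ae: "AE x in M. cond_var M (gen_sigma M B S) (B t) x = Qf H T z z"
    by (rule final_ce[OF tT psupp z_def])
  define d where "d = (\<lambda>\<tau>. p \<tau> - unitv sj \<tau>)"
  have dsupp: "\<forall>\<tau>. \<tau> \<notin> S \<longrightarrow> d \<tau> = 0" unfolding d_def unitv_def using psupp sjS by auto
  have zorth: "\<forall>\<sigma>\<in>S. Qf H T z (unitv \<sigma>) = 0" using porth unfolding z_def by simp
  have zd: "Qf H T z d = 0" "Qf H T d z = 0" using Q.orth_supp[OF finS dsupp zorth] by auto
  have w: "(\<lambda>\<tau>. z \<tau> + d \<tau>) = (\<lambda>\<tau>. unitv t \<tau> - unitv sj \<tau>)" unfolding z_def d_def by auto
  have "Qf H T (\<lambda>\<tau>. z \<tau> + d \<tau>) (\<lambda>\<tau>. z \<tau> + d \<tau>) = Qf H T z (\<lambda>\<tau>. z \<tau> + d \<tau>) + Qf H T d (\<lambda>\<tau>. z \<tau> + d \<tau>)"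
    by (rule Q.add_left)
  also have "Qf H T z (\<lambda>\<tau>. z \<tau> + d \<tau>) = Qf H T z z + Qf H T z d" by (metis Q.add_left Q.sym)
  also have "Qf H T d (\<lambda>\<tau>. z \<tau> + d \<tau>) = Qf H T d z + Qf H T d d" by (metis Q.add_left Q.sym)
  finally have "Qf H T (\<lambda>\<tau>. unitv t \<tau> - unitv sj \<tau>) (\<lambda>\<tau>. unitv t \<tau> - unitv sj \<tau>) = Qf H T z z + Qf H T d d"
    unfolding w using zd by simp
  hence zle: "Qf H T z z \<le> \<bar>t - sj\<bar> powr (2 * H)"
    using Q.psd[of d] Qf_diff_unitv[OF tT sjT] by simp
  have tsj: "t - sj = 1 / 2 ^ k"
    unfolding t_def sj_def dyadic_def using k by (simp add: field_simps)
  have "\<bar>t - sj\<bar> powr (2 * H) = (2 powr (- real k)) powr (2 * H)"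
    unfolding tsj by (simp add: powr_minus powr_realpow divide_inverse)
  also have "\<dots> = 2 powr (- 2 * real k * H)" by (simp add: powr_powr mult_ac)
  finally have "Qf H T z z \<le> 2 powr (- 2 * real k * H)" using zle by simp
  moreover have "(0::real) < 2 powr (- 2 * real k * H)" by simp
  ultimately have bnd: "Qf H T z z \<le> 2 * 2 powr (- 2 * real k * H)" by linarith
  show ?thesis using ae unfolding S_def t_def by eventually_elim (use bnd in simp)
qed

end
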